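(* Let $\mathbb{K}$ be a field of characteristic zero containing all complex roots of unity and $q$ an indeterminate transcendental over $\mathbb{K}$. Let $f_n(q)$ be a $q$-holonomic sequence satisfying a recurrence $\sum_{j=0}^d c_j(q,q^n)f_{n+j}(q)=0$ for all $n\in\mathbb{N}$, with $c_j\in\mathbb{K}[u,v]$ and $c_d\neq0$ (order $d$). Then for any root of unity $\omega\in\mathbb{C}$ of order $m$, the sequence $f_n(\omega q)$ is $q$-holonomic as well and satisfies a recurrence of this form of order at most $m\cdot d$.
   Context: A sequence $f_n(q)$ is $q$-holonomic if it satisfies a nontrivial linear recurrence $\sum_{j=0}^d c_j(q,q^n)f_{n+j}(q)=0$ for all $n\in\mathbb{N}$, with bivariate polynomials $c_j(u,v)\in\mathbb{K}[u,v]$ and $c_d\neq0$. *)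

theory Defs
  imports "HOL-Computational_Algebra.Polynomial" "HOL-Computational_Algebra.Fraction_Field"
begin

type_synonym 'a ratfun = "'a poly fract"

definition qvar :: "'a::idom ratfun" where
  "qvar = Fract [:0, 1:] 1"

definition const_rf :: "'a::idom \<Rightarrow> 'a ratfun" where
  "const_rf a = Fract [:a:] 1"

text \<open>A bivariate polynomial c(u,v) in K[u,v] is represented as an element of (K[u])[v];
  eval_bivar c x y is c(x,y).\<close>

definition eval_bivar :: "'a::idom poly poly \<Rightarrow> 'a ratfun \<Rightarrow> 'a ratfun \<Rightarrow> 'a ratfun" where
  "eval_bivar c x y = poly (map_poly (\<lambda>p. poly (map_poly const_rf p) x) c) y"

definition subst_rf :: "'a::idom \<Rightarrow> 'a ratfun \<Rightarrow> 'a ratfun" where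
  "subst_rf w r = (let ab = (SOME ab. snd ab \<noteq> 0 \<and> r = Fract (fst ab) (snd ab))
                   in Fract (pcompose (fst ab) [:0, w:]) (pcompose (snd ab) [:0, w:]))"

definition q_holonomic_rec :: "nat \<Rightarrow> (nat \<Rightarrow> 'a::idom poly poly) \<Rightarrow> (nat \<Rightarrow> 'a ratfun) \<Rightarrow> bool" where
  "q_holonomic_rec d c f \<longleftrightarrow> c d \<noteq> 0 \<and>
     (\<forall>n. (\<Sum>j\<le>d. eval_bivar (c j) qvar (qvar ^ n) * f (n + j)) = 0)"

end

theory Submission
  imports Defs
begin

definition ishom :: "('a::comm_ring_1 \<Rightarrow> 'b::comm_ring_1) \<Rightarrow> bool" where
  "ishom f \<longleftrightarrow> (\<forall>a b. f (a+b) = f a + f b) \<and> (\<forall>a b. f (a*b) = f a * f b) \<and> f 1 = 1"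

lemma ishom_add: "ishom f \<Longrightarrow> f (a+b) = f a + f b" by (simp add: ishom_def)
lemma ishom_mult: "ishom f \<Longrightarrow> f (a*b) = f a * f b" by (simp add: ishom_def)
lemma ishom_1: "ishom f \<Longrightarrow> f 1 = 1" by (simp add: ishom_def)
lemma ishom_0: "ishom f \<Longrightarrow> f 0 = 0"
proof -
  assume h: "ishom f"
  have "f (0+0) = f 0 + f 0" by (rule ishom_add[OF h])
  thus ?thesis by simp
qed
lemma ishom_sum: "ishom f \<Longrightarrow> f (sum g A) = (\<Sum>x\<in>A. f (g x))"
  by (induction A rule: infinite_finite_induct) (auto simp: ishom_0 ishom_add)
lemma ishom_power: "ishom f \<Longrightarrow> f (a ^ n) = f a ^ n"
  by (induction n) (auto simp: ishom_1 ishom_mult)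

lemma map_poly_add_hom: "ishom f \<Longrightarrow> map_poly f (p + q) = map_poly f p + map_poly f q"
  by (intro poly_eqI) (simp add: coeff_map_poly ishom_0 ishom_add)

lemma map_poly_mult_hom: "ishom f \<Longrightarrow> map_poly f (p * q) = map_poly f p * map_poly f q"
  by (intro poly_eqI) (simp add: coeff_map_poly ishom_0 coeff_mult ishom_sum ishom_mult)

lemma ishom_poly: "ishom f \<Longrightarrow> ishom (\<lambda>p. poly (map_poly f p) x)"
  unfolding ishom_def[of "\<lambda>p. poly (map_poly f p) x"]
  by (simp add: map_poly_add_hom map_poly_mult_hom ishom_1)

lemma ishom_comp_poly:
  assumes f: "ishom f" and g: "ishom g"
  shows "g (poly (map_poly f p) x) = poly (map_poly (g \<circ> f) p) (g x)"
proof (induction p)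
  case 0 then show ?case by (simp add: ishom_0[OF g])
next
  case (pCons a p)
  have "(g \<circ> f) 0 = 0" by (simp add: ishom_0[OF f] ishom_0[OF g])
  then show ?case using pCons
    by (simp add: map_poly_pCons ishom_0[OF f] ishom_add[OF g] ishom_mult[OF g])
qed

lemma poly_map_pcompose:
  assumes f: "ishom f"
  shows "poly (map_poly f (pcompose p q)) x = poly (map_poly f p) (poly (map_poly f q) x)"
proof (induction p)
  case 0 then show ?case by simp
next
  case (pCons a p)
  have h: "ishom (\<lambda>p. poly (map_poly f p) x)" by (rule ishom_poly[OF f])
  show ?case using pCons
    by (simp add: pcompose_pCons ishom_add[OF h] ishom_mult[OF h] map_poly_pCons ishom_0[OF f])
qed

lemma const_rf_hom: "ishom (const_rf :: 'a::idom \<Rightarrow> 'a ratfun)"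
  unfolding ishom_def const_rf_def
  by (simp add: One_fract_def mult.commute one_pCons)

lemma pcomp_lin_nz: "(w::'a::idom) \<noteq> 0 \<Longrightarrow> b \<noteq> 0 \<Longrightarrow> pcompose b [:0,w:] \<noteq> 0"
  using pcompose_eq_0_iff[of "[:0,w:]" b] by simp

lemma subst_Fract:
  fixes w :: "'a::idom"
  assumes w: "w \<noteq> 0" and b: "b \<noteq> 0"
  shows "subst_rf w (Fract a b) = Fract (pcompose a [:0,w:]) (pcompose b [:0,w:])"
proof -
  define ab where "ab = (SOME ab. snd ab \<noteq> 0 \<and> Fract a b = Fract (fst ab) (snd ab))"
  have ex: "\<exists>ab. snd ab \<noteq> 0 \<and> Fract a b = Fract (fst ab) (snd ab)"
    using b by (intro exI[of _ "(a,b)"]) simp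
  have ab: "snd ab \<noteq> 0 \<and> Fract a b = Fract (fst ab) (snd ab)"
    unfolding ab_def by (rule someI_ex[OF ex])
  hence e: "a * snd ab = fst ab * b" using b eq_fract(1) by metis
  have e2: "pcompose a [:0,w:] * pcompose (snd ab) [:0,w:] = pcompose (fst ab) [:0,w:] * pcompose b [:0,w:]"
    using e by (metis pcompose_mult)
  have "subst_rf w (Fract a b) = Fract (pcompose (fst ab) [:0,w:]) (pcompose (snd ab) [:0,w:])"
    unfolding subst_rf_def ab_def[symmetric] by (simp add: Let_def)
  also have "\<dots> = Fract (pcompose a [:0,w:]) (pcompose b [:0,w:])"
    using e2 pcomp_lin_nz[OF w b] pcomp_lin_nz[OF w] ab by (simp add: eq_fract(1))
  finally show ?thesis .
qed

lemma subst_hom: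
  fixes w :: "'a::idom"
  assumes w: "w \<noteq> 0"
  shows "ishom (subst_rf w)"
  unfolding ishom_def
proof (intro conjI allI)
  fix x y :: "'a ratfun"
  show "subst_rf w (x + y) = subst_rf w x + subst_rf w y"
  proof (cases x)
    case (Fract a b) note x = this
    show ?thesis
    proof (cases y)
      case (Fract c d)
      thus ?thesis using x w by (simp add: subst_Fract pcomp_lin_nz pcompose_add pcompose_mult)
    qed
  qed
  show "subst_rf w (x * y) = subst_rf w x * subst_rf w y"
  proof (cases x)
    case (Fract a b) note x = this
    show ?thesis
    proof (cases y)
      case (Fract c d)
      thus ?thesis using x w by (simp add: subst_Fract pcomp_lin_nz pcompose_mult)
    qed
  qed
next
  show "subst_rf w 1 = 1" using w by (simp add: One_fract_def subst_Fract pcompose_1)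
qed

lemma subst_const: "(w::'a::idom) \<noteq> 0 \<Longrightarrow> subst_rf w (const_rf a) = const_rf a"
  by (simp add: const_rf_def subst_Fract pcompose_1)

lemma subst_qvar: "(w::'a::idom) \<noteq> 0 \<Longrightarrow> subst_rf w qvar = const_rf w * qvar"
  by (simp add: const_rf_def qvar_def subst_Fract pcompose_pCons pcompose_1)

lemma hq_hom: "ishom (\<lambda>p. poly (map_poly (const_rf :: 'a::idom \<Rightarrow> 'a ratfun) p) x)"
  by (rule ishom_poly[OF const_rf_hom])

lemma ev_def': "eval_bivar P x y = poly (map_poly (\<lambda>p. poly (map_poly const_rf p) x) P) y"
  by (simp add: eval_bivar_def)

lemma ev_hom:
  fixes x y :: "'a::idom ratfun"
  shows "ishom (\<lambda>P. eval_bivar P x y)"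
  unfolding ev_def' by (rule ishom_poly[OF hq_hom])

lemma subst_ev:
  fixes w :: "'a::idom"
  assumes w: "w \<noteq> 0"
  shows "subst_rf w (eval_bivar P x y) = eval_bivar P (subst_rf w x) (subst_rf w y)"
proof -
  have c: "subst_rf w \<circ> (\<lambda>p. poly (map_poly const_rf p) x) = (\<lambda>p. poly (map_poly const_rf p) (subst_rf w x))"
  proof
    fix p
    have "subst_rf w \<circ> const_rf = const_rf" using w by (auto simp: subst_const)
    thus "(subst_rf w \<circ> (\<lambda>p. poly (map_poly const_rf p) x)) p = poly (map_poly const_rf p) (subst_rf w x)"
      using ishom_comp_poly[OF const_rf_hom subst_hom[OF w], of p x] by simp
  qed
  show ?thesis unfolding ev_def'
    using ishom_comp_poly[OF hq_hom[of x] subst_hom[OF w], of P y] c by simp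
qed

definition Qop :: "'a::idom \<Rightarrow> nat \<Rightarrow> 'a poly poly \<Rightarrow> 'a poly poly" where
  "Qop w i P = pcompose (map_poly (\<lambda>p. pcompose p [:0,w:]) P) [:0, monom (w^i) i:]"

lemma ev_Q:
  fixes w :: "'a::idom"
  shows "eval_bivar (Qop w i P) x y = eval_bivar P (const_rf w * x) (const_rf (w^i) * x^i * y)"
proof -
  let ?h = "\<lambda>x p. poly (map_poly (const_rf :: 'a \<Rightarrow> 'a ratfun) p) x"
  have h0: "?h x 0 = 0" by simp
  have c0: "const_rf (0::'a) = 0" by (rule ishom_0[OF const_rf_hom])
  have m: "?h x (monom c i) = const_rf c * x^i" for c
    using c0 by (simp add: map_poly_monom poly_monom)
  have L: "map_poly (?h x) [:0, monom (w^i) i:] = [:0, const_rf (w^i) * x^i:]"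
    using h0 m by (simp add: map_poly_pCons)
  have comp: "?h x \<circ> (\<lambda>p. pcompose p [:0,w:]) = ?h (const_rf w * x)"
  proof
    fix p
    show "(?h x \<circ> (\<lambda>p. pcompose p [:0,w:])) p = ?h (const_rf w * x) p"
      using poly_map_pcompose[OF const_rf_hom, of p "[:0,w:]" x] c0
      by (simp add: map_poly_pCons mult.commute)
  qed
  have "eval_bivar (Qop w i P) x y = poly (map_poly (?h x) (map_poly (\<lambda>p. pcompose p [:0,w:]) P)) (poly (map_poly (?h x) [:0, monom (w^i) i:]) y)"
    unfolding ev_def' Qop_def by (rule poly_map_pcompose[OF hq_hom])
  also have "\<dots> = poly (map_poly (?h (const_rf w * x)) P) (const_rf (w^i) * x^i * y)"
    using L comp by (simp add: map_poly_map_poly mult.commute)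
  finally show ?thesis unfolding ev_def' .
qed

lemma ev_inv:
  fixes t :: "'a::idom"
  assumes B: "\<forall>e. \<not> m dvd e \<longrightarrow> coeff B e = 0" and t: "t^m = 1"
  shows "eval_bivar B x (const_rf t * y) = eval_bivar B x y"
proof -
  let ?h = "\<lambda>p. poly (map_poly (const_rf :: 'a \<Rightarrow> 'a ratfun) p) x"
  have h0: "?h 0 = 0" by simp
  have "\<And>i. ?h (coeff B i) * (const_rf t * y) ^ i = ?h (coeff B i) * y ^ i"
  proof -
    fix i
    show "?h (coeff B i) * (const_rf t * y) ^ i = ?h (coeff B i) * y ^ i"
    proof (cases "m dvd i")
      case True
      then obtain k where "i = m * k" by blast
      hence "t ^ i = 1" using t by (simp add: power_mult)
      hence "const_rf t ^ i = 1" using ishom_power[OF const_rf_hom, of t i] ishom_1[OF const_rf_hom] by metis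
      thus ?thesis by (simp add: power_mult_distrib)
    next
      case False thus ?thesis using B by simp
    qed
  qed
  moreover have "poly (map_poly ?h B) z = (\<Sum>i\<le>degree (map_poly ?h B). ?h (coeff B i) * z^i)" for z
    by (subst poly_altdef) (simp add: coeff_map_poly h0 del: poly_map_poly_cnj)
  ultimately show ?thesis unfolding ev_def' by (metis (no_types, lifting) sum.cong)
qed

lemma linsys_list:
  fixes eqs :: "('v \<Rightarrow> 'r::idom) list"
  assumes "finite V" "length eqs < card V"
  shows "\<exists>x. (\<exists>v\<in>V. x v \<noteq> 0) \<and> (\<forall>a\<in>set eqs. (\<Sum>v\<in>V. a v * x v) = 0)"
  using assms
proof (induction "length eqs" arbitrary: eqs V)
  case 0
  then obtain v0 where "v0 \<in> V" by fastforce
  thus ?case using 0 by (intro exI[of _ "\<lambda>v. if v = v0 then 1 else 0"]) auto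
next
  case (Suc n)
  then obtain a rest where eqs: "eqs = a # rest" and lr: "length rest = n" by (cases eqs) auto
  show ?case
  proof (cases "\<forall>v\<in>V. a v = 0")
    case True
    from Suc.hyps(1)[OF lr[symmetric] Suc.prems(1)] Suc.prems(2) lr Suc.hyps(2) obtain x where
      "(\<exists>v\<in>V. x v \<noteq> 0) \<and> (\<forall>a\<in>set rest. (\<Sum>v\<in>V. a v * x v) = 0)" by auto
    thus ?thesis using True eqs by auto
  next
    case False
    then obtain v0 where v0: "v0 \<in> V" "a v0 \<noteq> 0" by auto
    define V' where "V' = V - {v0}"
    have fV': "finite V'" using Suc.prems(1) by (simp add: V'_def)
    have cV': "card V' = card V - 1" using v0 Suc.prems(1) by (simp add: V'_def)
    define rest' where "rest' = map (\<lambda>b v. b v * a v0 - b v0 * a v) rest"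
    have lr': "n = length rest'" using lr by (simp add: rest'_def)
    have "length rest' < card V'" using Suc.prems(2) cV' eqs by (simp add: rest'_def)
    from Suc.hyps(1)[OF lr' fV' this] obtain y where y1: "\<exists>v\<in>V'. y v \<noteq> 0"
      and y2: "\<forall>b\<in>set rest'. (\<Sum>v\<in>V'. b v * y v) = 0" by blast
    define x where "x = (\<lambda>v. if v = v0 then - (\<Sum>w\<in>V'. a w * y w) else a v0 * y v)"
    have split: "(\<Sum>v\<in>V. b v * x v) = b v0 * x v0 + (\<Sum>v\<in>V'. b v * x v)" for b
      using Suc.prems(1) v0 by (simp add: V'_def sum.remove)
    have xV': "(\<Sum>v\<in>V'. b v * x v) = (\<Sum>v\<in>V'. b v * (a v0 * y v))" for b
      by (rule sum.cong) (auto simp: x_def V'_def)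
    have "\<exists>v\<in>V. x v \<noteq> 0"
    proof -
      from y1 obtain v1 where "v1 \<in> V'" "y v1 \<noteq> 0" by blast
      thus ?thesis using v0 by (intro bexI[of _ v1]) (auto simp: x_def V'_def)
    qed
    moreover have "(\<Sum>v\<in>V. a v * x v) = 0"
      unfolding split xV' by (simp add: x_def sum_distrib_left algebra_simps)
    moreover have "(\<Sum>v\<in>V. b v * x v) = 0" if b: "b \<in> set rest" for b
    proof -
      have "(\<lambda>v. b v * a v0 - b v0 * a v) \<in> set rest'" using b by (auto simp: rest'_def)
      from bspec[OF y2 this] have "(\<Sum>v\<in>V'. (b v * a v0 - b v0 * a v) * y v) = 0" by simp
      hence "(\<Sum>v\<in>V'. b v * (a v0 * y v)) - b v0 * (\<Sum>w\<in>V'. a w * y w) = 0"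
        by (simp add: algebra_simps sum_subtractf sum_distrib_left)
      thus ?thesis unfolding split xV' by (simp add: x_def)
    qed
    ultimately show ?thesis using eqs by auto
  qed
qed

lemma linsys:
  fixes E :: "('v \<Rightarrow> 'r::idom) set"
  assumes "finite V" "finite E" "card E < card V"
  shows "\<exists>x. (\<exists>v\<in>V. x v \<noteq> 0) \<and> (\<forall>a\<in>E. (\<Sum>v\<in>V. a v * x v) = 0)"
proof -
  obtain xs where "set xs = E" "distinct xs" using assms(2) finite_distinct_list by blast
  hence "length xs < card V" using assms(3) distinct_card by fastforce
  from linsys_list[OF assms(1) this] show ?thesis using \<open>set xs = E\<close> by blast
qed

definition Bsum :: "nat \<Rightarrow> nat \<Rightarrow> (nat \<Rightarrow> 'r::comm_ring_1 poly) \<Rightarrow> (nat \<Rightarrow> nat \<Rightarrow> 'r poly) \<Rightarrow> nat \<Rightarrow> 'r poly" where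
  "Bsum N d lam A k = (\<Sum>i\<le>N. \<Sum>j\<le>d. if i+j=k then lam i * A i j else 0)"

lemma sum_if_eq: fixes i k d :: nat shows "(\<Sum>j\<le>d. if i+j=k then F j else 0) = (if i \<le> k \<and> k - i \<le> d then F (k-i) else (0::'b::comm_monoid_add))"
proof (cases "i \<le> k")
  case True
  hence e: "\<And>j. (i+j=k) = (j = k-i)" by arith
  have "(\<Sum>j\<le>d. if i+j=k then F j else 0) = (\<Sum>j\<le>d. if j = k - i then F j else 0)"
    by (simp only: e)
  thus ?thesis using True by simp
next
  case False thus ?thesis by simp
qed

lemma Bsum_alt: "Bsum N d lam A k = (\<Sum>i\<le>N. if i \<le> k \<and> k - i \<le> d then lam i * A i (k-i) else 0)"
  unfolding Bsum_def by (simp add: sum_if_eq)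

lemma card_nondvd:
  assumes m: "(m::nat) > 0"
  shows "card {e. e < m*Z \<and> \<not> m dvd e} = m*Z - Z"
proof -
  have U: "{..<m*Z} = {e. e < m*Z \<and> \<not> m dvd e} \<union> {e. e < m*Z \<and> m dvd e}" by auto
  have D: "{e. e < m*Z \<and> m dvd e} = (\<lambda>t. m*t) ` {..<Z}"
  proof
    show "{e. e < m*Z \<and> m dvd e} \<subseteq> (\<lambda>t. m*t) ` {..<Z}"
      using m by (auto elim!: dvdE)
    show "(\<lambda>t. m*t) ` {..<Z} \<subseteq> {e. e < m*Z \<and> m dvd e}"
      using m by auto
  qed
  have cD: "card {e. e < m*Z \<and> m dvd e} = Z"
    unfolding D using m by (subst card_image) (auto simp: inj_on_def)
  have "m*Z = card {e. e < m*Z \<and> \<not> m dvd e} + card {e. e < m*Z \<and> m dvd e}"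
    by (subst card_Un_disjoint[symmetric]) (auto simp flip: U)
  thus ?thesis using cD by simp
qed

lemma count_ineq:
  fixes m' d a :: nat
  defines "P \<equiv> m'*d + 1"
  defines "Z \<equiv> P*a + 1"
  shows "((Suc m')*d + 1) * (Suc m' * Z - Z) < P * (Suc m' * Z - a)"
proof -
  have z: "Suc m' * Z - Z = m' * Z" by simp
  have az: "a < Suc m' * Z" unfolding Z_def P_def by (simp add: algebra_simps)
  have "int (((Suc m')*d + 1) * (Suc m' * Z - Z)) + 1 = int (P * (Suc m' * Z - a))"
    unfolding z using az by (simp add: of_nat_diff Z_def P_def algebra_simps)
  thus ?thesis by linarith
qed

lemma core:
  fixes A :: "nat \<Rightarrow> nat \<Rightarrow> 'r::idom poly"
  assumes m: "m > 0" and Ad: "\<forall>i. A i d \<noteq> 0"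
  shows "\<exists>lam i0. i0 \<le> (m-1)*d \<and> (\<forall>k e. \<not> m dvd e \<longrightarrow> coeff (Bsum ((m-1)*d) d lam A k) e = 0)
     \<and> Bsum ((m-1)*d) d lam A (i0+d) \<noteq> 0 \<and> (\<forall>k. i0+d < k \<longrightarrow> Bsum ((m-1)*d) d lam A k = 0)"
proof -
  obtain m' where m': "m = Suc m'" using m by (cases m) auto
  define N where "N = (m-1)*d"
  define a where "a = (\<Sum>i\<le>N. \<Sum>j\<le>d. degree (A i j))"
  define P where "P = m'*d + 1"
  define Z where "Z = P*a + 1"
  define M where "M = m*Z - 1 - a"
  have NP: "N + 1 = P" by (simp add: N_def P_def m')
  have aZ: "a < m*Z" unfolding Z_def m' P_def by (simp add: algebra_simps)
  have M1: "M + 1 = m*Z - a" using aZ by (simp add: M_def)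
  have dega: "degree (A i j) \<le> a" if "i \<le> N" "j \<le> d" for i j
  proof -
    have "degree (A i j) \<le> (\<Sum>j\<le>d. degree (A i j))" using that by (intro member_le_sum) auto
    also have "\<dots> \<le> a" unfolding a_def using that by (intro member_le_sum[where f="\<lambda>i. \<Sum>j\<le>d. degree (A i j)"]) auto
    finally show ?thesis .
  qed
  define V where "V = {..N} \<times> {..M}"
  define S where "S = {e. e < m*Z \<and> \<not> m dvd e}"
  define W where "W = {..N+d} \<times> S"
  define form where "form = (\<lambda>(k,e) (i,e1). if i \<le> k \<and> k - i \<le> d \<and> e1 \<le> e then coeff (A i (k-i)) (e-e1) else 0)"
  define E where "E = form ` W"
  have fS: "finite S" unfolding S_def by auto
  have fV: "finite V" unfolding V_def by auto
  have fW: "finite W" unfolding W_def using fS by auto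
  have cV: "card V = P * (m*Z - a)" unfolding V_def using NP M1 by (simp add: card_cartesian_product)
  have cW: "card W = (m*d + 1) * (m*Z - Z)" unfolding W_def S_def
    using card_nondvd[OF m, of Z] by (simp add: card_cartesian_product N_def m' algebra_simps)
  have "card W < card V" unfolding cV cW P_def Z_def m' using count_ineq[of m' d a] a_def
    by (simp add: P_def Z_def)
  hence cE: "card E < card V" unfolding E_def using card_image_le[OF fW, of form] by linarith
  have fE: "finite E" unfolding E_def using fW by simp
  from linsys[OF fV fE cE] obtain x where x1: "\<exists>v\<in>V. x v \<noteq> 0"
    and x2: "\<forall>f\<in>E. (\<Sum>v\<in>V. f v * x v) = 0" by blast
  define lam where "lam = (\<lambda>i. \<Sum>e1\<le>M. monom (x (i,e1)) e1)"
  have coeff_lam: "coeff (lam i) e = (if e \<le> M then x (i,e) else 0)" for i e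
    unfolding lam_def coeff_sum by (simp add: coeff_monom)
  have deg_lam: "degree (lam i) \<le> M" for i
    unfolding lam_def by (intro degree_sum_le) (auto intro: order.trans[OF degree_monom_le])
  define B where "B = Bsum N d lam A"
  have coeffB: "coeff (B k) e = (\<Sum>v\<in>V. form (k,e) v * x v)" for k e
  proof -
    have c1: "coeff (lam i * Q) e = (\<Sum>e1\<le>M. if e1 \<le> e then x (i,e1) * coeff Q (e-e1) else 0)" for i Q
      unfolding lam_def sum_distrib_right coeff_sum
      by (intro sum.cong) (auto simp: coeff_monom_mult)
    have "coeff (B k) e = (\<Sum>i\<le>N. if i \<le> k \<and> k - i \<le> d then coeff (lam i * A i (k-i)) e else 0)"
      unfolding B_def Bsum_alt coeff_sum by (intro sum.cong) auto
    also have "\<dots> = (\<Sum>i\<le>N. \<Sum>e1\<le>M. form (k,e) (i,e1) * x (i,e1))"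
      unfolding c1 form_def by (intro sum.cong) (auto simp: mult.commute intro!: sum.cong)
    also have "\<dots> = (\<Sum>v\<in>V. form (k,e) v * x v)"
      unfolding V_def by (simp add: sum.cartesian_product)
    finally show ?thesis .
  qed
  have degB: "degree (B k) \<le> M + a" for k
    unfolding B_def Bsum_alt
  proof (intro degree_sum_le)
    fix i assume "i \<in> {..N}"
    thus "degree (if i \<le> k \<and> k - i \<le> d then lam i * A i (k-i) else 0) \<le> M + a"
      using deg_lam[of i] dega[of i "k-i"] degree_mult_le[of "lam i" "A i (k-i)"] by auto
  qed simp
  have inv: "\<forall>k e. \<not> m dvd e \<longrightarrow> coeff (B k) e = 0"
  proof (intro allI impI)
    fix k e assume nd: "\<not> m dvd e"
    show "coeff (B k) e = 0"
    proof (cases "e < m*Z")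
      case False
      hence "degree (B k) < e" using degB[of k] M1 aZ by linarith
      thus ?thesis by (simp add: coeff_eq_0)
    next
      case True
      show ?thesis
      proof (cases "k \<le> N + d")
        case True
        hence "(k,e) \<in> W" using \<open>e < m*Z\<close> nd by (simp add: W_def S_def)
        hence "form (k,e) \<in> E" by (simp add: E_def)
        thus ?thesis using x2 coeffB by simp
      next
        case False
        hence "B k = 0" unfolding B_def Bsum_alt by (intro sum.neutral) auto
        thus ?thesis by simp
      qed
    qed
  qed
  from x1 obtain i1 e1 where ie1: "i1 \<le> N" "e1 \<le> M" "x (i1,e1) \<noteq> 0" by (auto simp: V_def)
  define I where "I = {i. i \<le> N \<and> lam i \<noteq> 0}"
  have "i1 \<in> I" using ie1 coeff_lam[of i1 e1] by (auto simp: I_def)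
  have fI: "finite I" by (simp add: I_def)
  define i0 where "i0 = Max I"
  have i0I: "i0 \<in> I" unfolding i0_def using fI \<open>i1 \<in> I\<close> by (intro Max_in) auto
  have i0N: "i0 \<le> N" and lam0: "lam i0 \<noteq> 0" using i0I by (auto simp: I_def)
  have above: "lam i = 0" if "i0 < i" "i \<le> N" for i
  proof (rule ccontr)
    assume "lam i \<noteq> 0" hence "i \<in> I" using that by (simp add: I_def)
    hence "i \<le> i0" unfolding i0_def using fI by simp
    thus False using that by simp
  qed
  have top: "B (i0+d) = lam i0 * A i0 d"
  proof -
    have "B (i0+d) = (\<Sum>i\<le>N. if i \<le> i0+d \<and> i0+d - i \<le> d then lam i * A i (i0+d-i) else 0)"
      unfolding B_def Bsum_alt ..
    also have "\<dots> = (if i0 \<le> i0+d \<and> i0+d - i0 \<le> d then lam i0 * A i0 (i0+d-i0) else 0)"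
    proof (rule sum.remove[THEN trans])
      show "finite {..N}" by simp
      show "i0 \<in> {..N}" using i0N by simp
      show "(if i0 \<le> i0 + d \<and> i0 + d - i0 \<le> d then lam i0 * A i0 (i0 + d - i0) else 0) +
        (\<Sum>i\<in>{..N} - {i0}. if i \<le> i0 + d \<and> i0 + d - i \<le> d then lam i * A i (i0 + d - i) else 0) =
        (if i0 \<le> i0 + d \<and> i0 + d - i0 \<le> d then lam i0 * A i0 (i0 + d - i0) else 0)"
      proof -
        have "(\<Sum>i\<in>{..N} - {i0}. if i \<le> i0 + d \<and> i0 + d - i \<le> d then lam i * A i (i0 + d - i) else 0) = 0"
        proof (rule sum.neutral, rule ballI)
          fix i assume i: "i \<in> {..N} - {i0}"
          show "(if i \<le> i0 + d \<and> i0 + d - i \<le> d then lam i * A i (i0 + d - i) else 0) = 0"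
          proof (cases "i < i0")
            case True thus ?thesis by auto
          next
            case False thus ?thesis using i above[of i] by auto
          qed
        qed
        thus ?thesis by simp
      qed
    qed
    finally show ?thesis by simp
  qed
  have topnz: "B (i0+d) \<noteq> 0" using top lam0 Ad by simp
  have zero: "B k = 0" if "i0 + d < k" for k
    unfolding B_def Bsum_alt using that above by (intro sum.neutral) auto
  show ?thesis
    using i0N inv topnz zero unfolding B_def N_def by blast
qed

lemma Qop_nz:
  fixes w :: "'a::idom"
  assumes w: "w \<noteq> 0" and P: "P \<noteq> 0"
  shows "Qop w i P \<noteq> 0"
proof -
  have "map_poly (\<lambda>p. pcompose p [:0,w:]) P \<noteq> 0"
    using P pcomp_lin_nz[OF w] by (subst map_poly_eq_0_iff) auto
  moreover have "degree [:0, monom (w^i) i:] > 0" using w by simp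
  ultimately show ?thesis unfolding Qop_def using pcompose_eq_0_iff by blast
qed

theorem corollary1:
  fixes f :: "nat \<Rightarrow> 'a::field_char_0 ratfun"
    and c :: "nat \<Rightarrow> 'a poly poly"
    and d m :: nat
    and \<omega> :: 'a
  assumes roots_of_unity: "\<forall>k>0. \<exists>z::'a. z ^ k = 1 \<and> (\<forall>i. 0 < i \<and> i < k \<longrightarrow> z ^ i \<noteq> 1)"
    and rec: "q_holonomic_rec d c f"
    and m_pos: "m > 0"
    and \<omega>_root: "\<omega> ^ m = 1"
    and \<omega>_order: "\<forall>i. 0 < i \<and> i < m \<longrightarrow> \<omega> ^ i \<noteq> 1"
  shows "\<exists>d' c'. d' \<le> m * d \<and> q_holonomic_rec d' c' (\<lambda>n. subst_rf \<omega> (f n))"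
proof -
  have w0: "\<omega> \<noteq> 0" using \<omega>_root m_pos by (metis power_0_left less_not_refl2 zero_neq_one)
  let ?s = "subst_rf \<omega>"
  have sh: "ishom ?s" by (rule subst_hom[OF w0])
  have cd: "c d \<noteq> 0" and rc: "\<And>n. (\<Sum>j\<le>d. eval_bivar (c j) qvar (qvar ^ n) * f (n + j)) = 0"
    using rec unfolding q_holonomic_rec_def by auto
  define A where "A = (\<lambda>i j. Qop \<omega> i (c j))"
  have Ad: "\<forall>i. A i d \<noteq> 0" using Qop_nz[OF w0 cd] by (simp add: A_def)
  define N where "N = (m-1)*d"
  from core[where A=A and d=d, OF m_pos Ad] obtain lam i0 where i0: "i0 \<le> N"
    and inv: "\<forall>k e. \<not> m dvd e \<longrightarrow> coeff (Bsum N d lam A k) e = 0"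
    and nz: "Bsum N d lam A (i0+d) \<noteq> 0"
    and zero: "\<forall>k. i0+d < k \<longrightarrow> Bsum N d lam A k = 0"
    unfolding N_def by blast
  define B where "B = Bsum N d lam A"
  have le: "i0 + d \<le> m * d" using i0 m_pos unfolding N_def by (cases m) auto
  have "q_holonomic_rec (i0+d) B (\<lambda>n. ?s (f n))"
    unfolding q_holonomic_rec_def
  proof (intro conjI allI)
    show "B (i0+d) \<noteq> 0" using nz by (simp add: B_def)
    fix n
    define y where "y = const_rf (\<omega>^n) * qvar ^ n"
    have tm: "(\<omega>^n)^m = 1" using \<omega>_root by (metis power_mult power_mult_distrib mult.commute power_one)
    let ?L = "\<lambda>i. eval_bivar (lam i) qvar y"
    let ?E = "\<lambda>i j. eval_bivar (c j) qvar (qvar ^ (n+i))"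
    have evA: "eval_bivar (A i j) qvar y = ?s (?E i j)" for i j
    proof -
      have "?s (qvar ^ (n+i)) = (const_rf \<omega> * qvar) ^ (n+i)"
        using ishom_power[OF sh] subst_qvar[OF w0] by simp
      also have "\<dots> = const_rf (\<omega>^i) * qvar^i * y"
        unfolding y_def ishom_power[OF const_rf_hom] by (simp add: power_mult_distrib power_add algebra_simps)
      finally have "?s (qvar ^ (n+i)) = const_rf (\<omega>^i) * qvar^i * y" .
      thus ?thesis unfolding A_def ev_Q subst_ev[OF w0] subst_qvar[OF w0] by simp
    qed
    have evB: "eval_bivar (B k) qvar (qvar^n) = (\<Sum>i\<le>N. \<Sum>j\<le>d. if i+j=k then ?L i * ?s (?E i j) else 0)" for k
    proof -
      have "eval_bivar (B k) qvar (qvar^n) = eval_bivar (B k) qvar y"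
        unfolding y_def using ev_inv[OF _ tm] inv by (simp add: B_def)
      also have "\<dots> = (\<Sum>i\<le>N. \<Sum>j\<le>d. eval_bivar (if i+j=k then lam i * A i j else 0) qvar y)"
        unfolding B_def Bsum_def by (simp add: ishom_sum[OF ev_hom])
      also have "\<dots> = (\<Sum>i\<le>N. \<Sum>j\<le>d. if i+j=k then ?L i * ?s (?E i j) else 0)"
        by (intro sum.cong refl) (simp add: ishom_mult[OF ev_hom] ishom_0[OF ev_hom] evA)
      finally show ?thesis .
    qed
    have "(\<Sum>k\<le>i0+d. eval_bivar (B k) qvar (qvar ^ n) * ?s (f (n + k)))
        = (\<Sum>k\<le>N+d. eval_bivar (B k) qvar (qvar ^ n) * ?s (f (n + k)))"
      using zero i0 by (intro sum.mono_neutral_left) (auto simp: B_def ishom_0[OF ev_hom] not_le)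
    also have "\<dots> = (\<Sum>k\<le>N+d. \<Sum>i\<le>N. \<Sum>j\<le>d. if i+j=k then ?L i * ?s (?E i j) * ?s (f (n+k)) else 0)"
      unfolding evB sum_distrib_right by (intro sum.cong refl) auto
    also have "\<dots> = (\<Sum>i\<le>N. \<Sum>j\<le>d. \<Sum>k\<le>N+d. if k = i+j then ?L i * ?s (?E i j) * ?s (f (n+k)) else 0)"
      by (subst sum.swap) (subst (2) sum.swap, simp add: eq_commute)
    also have "\<dots> = (\<Sum>i\<le>N. ?L i * ?s (\<Sum>j\<le>d. ?E i j * f (n+i+j)))"
      by (intro sum.cong refl) (simp add: ishom_sum[OF sh] ishom_mult[OF sh] sum_distrib_left mult.assoc add.assoc)
    also have "\<dots> = 0"
    proof -
      have e: "(\<Sum>j\<le>d. ?E i j * f (n+i+j)) = 0" for i using rc[of "n+i"] by (simp add: add.assoc)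
      thus ?thesis using e by (simp add: ishom_0[OF sh])
    qed
    finally show "(\<Sum>k\<le>i0+d. eval_bivar (B k) qvar (qvar ^ n) * ?s (f (n + k))) = 0" .
  qed
  thus ?thesis using le by blast
qed

end
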